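(* Let $n,m$ be integers with $0<m<n$. Then $\mathcal{V}_n^m=\mathrm{span}\{\tilde\varphi_{n,k}^m:\ k=1,\ldots,n\}$ and $$\langle\tilde\varphi_{n,k}^m,\tilde\varphi_{n,h}^m\rangle_{L^2_w}=\delta_{k,h},\qquad k,h=1,\ldots,n.$$
   Context: Let $w(x)=(1-x^2)^{-1/2}$ on $[-1,1]$ and $\langle f,g\rangle_{L^2_w}=\int_{-1}^1 f(x)g(x)w(x)\,dx$. The orthonormal Chebyshev polynomials are $p_0(x)=\sqrt{1/\pi}$ and $p_r(x)=\sqrt{2/\pi}\cos(r\arccos x)$ for $r\ge1$. The Chebyshev nodes are $x_k^n=\cos\frac{(2k-1)\pi}{2n}$, $k=1,\ldots,n$. For $0<m<n$ set $\mu_{n,r}^m=1$ if $0\le r\le n-m$, $\mu_{n,r}^m=\frac{m+n-r}{2m}$ if $n-m<r<n+m$, and $\mu_{n,r}^m=0$ otherwise. For $r=0,\ldots,n-1$ define $q_{n,r}^m=p_r$ if $0\le r\le n-m$, and $q_{n,r}^m=\mu_{n,r}^m p_r-\mu_{n,2n-r}^m p_{2n-r}$ if $n-m<r<n$; set $\nu_{n,r}^m=1$ if $0\le r\le n-m$ and $\nu_{n,r}^m=\frac{m^2+(n-r)^2}{2m^2}$ if $n-m<r<n$. The space $\mathcal{V}_n^m$ is $\mathrm{span}\{q_{n,r}^m: r=0,\ldots,n-1\}$ (equivalently, the span of the VP polynomials $\Phi_{n,k}^m(x)=\frac{\pi}{n}\sum_{r=0}^{n+m-1}\mu_{n,r}^m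 p_r(x_k^n)p_r(x)$, $k=1,\ldots,n$). Define $\tau_{r,k}^n=\sqrt{\frac{\pi}{n\,\nu_{n,r}^m}}\,p_r(x_k^n)$ and the orthonormal VP scaling functions $\tilde\varphi_{n,k}^m(x)=\sum_{r=0}^{n-1}\tau_{r,k}^n q_{n,r}^m(x)$, $k=1,\ldots,n$. *)

theory Defs
  imports "HOL-Analysis.Analysis"
begin

definition cheb_w :: "real \<Rightarrow> real" where
  "cheb_w x = 1 / sqrt (1 - x\<^sup>2)"

definition cheb_p :: "nat \<Rightarrow> real \<Rightarrow> real" where
  "cheb_p r x = (if r = 0 then sqrt (1 / pi) else sqrt (2 / pi) * cos (real r * arccos x))"

definition cheb_node :: "nat \<Rightarrow> nat \<Rightarrow> real" where
  "cheb_node n k = cos ((2 * real k - 1) * pi / (2 * real n))"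

definition vp_mu :: "nat \<Rightarrow> nat \<Rightarrow> nat \<Rightarrow> real" where
  "vp_mu n m r = (if r \<le> n - m then 1
                  else if r < n + m then (real m + real n - real r) / (2 * real m)
                  else 0)"

definition vp_q :: "nat \<Rightarrow> nat \<Rightarrow> nat \<Rightarrow> real \<Rightarrow> real" where
  "vp_q n m r x = (if r \<le> n - m then cheb_p r x
                   else vp_mu n m r * cheb_p r x - vp_mu n m (2 * n - r) * cheb_p (2 * n - r) x)"

definition vp_nu :: "nat \<Rightarrow> nat \<Rightarrow> nat \<Rightarrow> real" where
  "vp_nu n m r = (if r \<le> n - m then 1
                  else (real m ^ 2 + (real n - real r) ^ 2) / (2 * real m ^ 2))"

definition vp_tau :: "nat \<Rightarrow> nat \<Rightarrow> nat \<Rightarrow> nat \<Rightarrow> real" where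
  "vp_tau n m r k = sqrt (pi / (real n * vp_nu n m r)) * cheb_p r (cheb_node n k)"

definition vp_phi :: "nat \<Rightarrow> nat \<Rightarrow> nat \<Rightarrow> real \<Rightarrow> real" where
  "vp_phi n m k x = (\<Sum>r<n. vp_tau n m r k * vp_q n m r x)"

definition fun_span :: "('i \<Rightarrow> real \<Rightarrow> real) \<Rightarrow> 'i set \<Rightarrow> (real \<Rightarrow> real) set" where
  "fun_span f I = {(\<lambda>x. \<Sum>i\<in>I. c i * f i x) | c. True}"

definition VP_space :: "nat \<Rightarrow> nat \<Rightarrow> (real \<Rightarrow> real) set" where
  "VP_space n m = fun_span (vp_q n m) {0..<n}"

end

theory Submission
  imports Defs
begin

lemma two_sin_cos: "2 * sin (y::real) * cos z = sin (z + y) - sin (z - y)"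
  by (simp add: sin_add sin_diff)

lemma tele1: "n \<ge> 1 \<Longrightarrow> 2 * sin y * (\<Sum>r\<in>{1..<n}. cos (2 * real r * y)) = sin ((2 * real n - 1) * y) - sin y"
proof (induction n)
  case 0 then show ?case by simp
next
  case (Suc n)
  show ?case
  proof (cases "n = 0")
    case True then show ?thesis by simp
  next
    case False
    then have "2 * sin y * (\<Sum>r\<in>{1..<Suc n}. cos (2 * real r * y))
        = 2 * sin y * (\<Sum>r\<in>{1..<n}. cos (2 * real r * y)) + 2 * sin y * cos (2 * real n * y)"
      by (simp add: distrib_left)
    also have "\<dots> = sin ((2 * real n - 1) * y) - sin y + (sin (2 * real n * y + y) - sin (2 * real n * y - y))"
      using Suc False by (simp add: two_sin_cos)
    also have "\<dots> = sin ((2 * real (Suc n) - 1) * y) - sin y"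
      by (simp add: algebra_simps)
    finally show ?thesis .
  qed
qed

lemma tele2: "2 * sin y * (\<Sum>k\<in>{1..n}. cos ((2 * real k - 1) * y)) = sin (2 * real n * y)"
proof (induction n)
  case 0 then show ?case by simp
next
  case (Suc n)
  have "2 * sin y * (\<Sum>k\<in>{1..Suc n}. cos ((2 * real k - 1) * y))
      = 2 * sin y * (\<Sum>k\<in>{1..n}. cos ((2 * real k - 1) * y)) + 2 * sin y * cos ((2 * real n + 1) * y)"
    by (simp add: distrib_left algebra_simps)
  also have "\<dots> = sin (2 * real n * y) + (sin ((2 * real n + 1) * y + y) - sin ((2 * real n + 1) * y - y))"
    using Suc by (simp add: two_sin_cos)
  also have "\<dots> = sin (2 * real (Suc n) * y)"
    by (simp add: algebra_simps)
  finally show ?case .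
qed

lemma sin_pos_frac:
  assumes "0 < j" "j < 2 * n"
  shows "sin (real j * pi / (2 * real n)) \<noteq> 0"
proof -
  have "0 < real j * pi / (2 * real n)" using assms by simp
  moreover have "real j * pi / (2 * real n) < pi" using assms
    by (simp add: divide_simps)
  ultimately show ?thesis using sin_gt_zero by fastforce
qed

lemma sumA:
  assumes "0 < j" "j < 2 * n"
  shows "(\<Sum>r\<in>{1..<n}. cos (real r * (real j * pi / real n))) = ((-1) ^ (j+1) - 1) / 2"
proof -
  define y where "y = real j * pi / (2 * real n)"
  have n1: "n \<ge> 1" using assms by simp
  have sy: "sin y \<noteq> 0" unfolding y_def using sin_pos_frac[OF assms] .
  have e: "\<And>r. real r * (real j * pi / real n) = 2 * real r * y" unfolding y_def using n1 by simp
  have "sin ((2 * real n - 1) * y) = sin (real j * pi - y)"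
    unfolding y_def using n1 by (simp add: field_simps)
  also have "\<dots> = - ((-1)^j) * sin y" by (simp add: sin_diff)
  finally have "2 * sin y * (\<Sum>r\<in>{1..<n}. cos (real r * (real j * pi / real n))) = (- ((-1)^j) - 1) * sin y"
    using tele1[OF n1, of y] e by (simp add: algebra_simps)
  then have "sin y * (1 + 2 * (\<Sum>r\<in>{1..<n}. cos (real r * (real j * pi / real n)))) = sin y * (- ((-1)^j))"
    by (simp add: algebra_simps)
  then have "1 + 2 * (\<Sum>r\<in>{1..<n}. cos (real r * (real j * pi / real n))) = - ((-1)^j)"
    using sy by (subst (asm) mult_left_cancel) auto
  then show ?thesis by (simp add: field_simps)
qed

lemma sumB:
  assumes "0 < j" "j < 2 * n"
  shows "(\<Sum>k\<in>{1..n}. cos (real j * ((2 * real k - 1) * pi / (2 * real n)))) = 0"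
proof -
  define y where "y = real j * pi / (2 * real n)"
  have sy: "sin y \<noteq> 0" unfolding y_def using sin_pos_frac[OF assms] .
  have e: "\<And>k. real j * ((2 * real k - 1) * pi / (2 * real n)) = (2 * real k - 1) * y" unfolding y_def by simp
  have "sin (2 * real n * y) = 0" unfolding y_def using assms by simp
  then show ?thesis using tele2[of y n] sy e by simp
qed


definition cc :: "nat \<Rightarrow> real" where "cc r = (if r = 0 then sqrt (1/pi) else sqrt (2/pi))"

lemma cheb_p_alt: "cheb_p r x = cc r * cos (real r * arccos x)"
  by (simp add: cheb_p_def cc_def)

lemma cc_sq: "cc r * cc r = (if r = 0 then 1/pi else 2/pi)"
  by (simp add: cc_def)

lemma node_arccos:
  assumes "1 \<le> k" "k \<le> n"
  shows "arccos (cheb_node n k) = (2 * real k - 1) * pi / (2 * real n)"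
proof -
  have "0 \<le> (2 * real k - 1) * pi / (2 * real n)" using assms by simp
  moreover have "(2 * real k - 1) * pi / (2 * real n) \<le> pi" using assms
    by (simp add: divide_simps)
  ultimately show ?thesis unfolding cheb_node_def by (simp add: arccos_cos)
qed

lemma sumB':
  assumes "j < 2 * n"
  shows "(\<Sum>k\<in>{1..n}. cos (real j * ((2 * real k - 1) * pi / (2 * real n)))) = (if j = 0 then real n else 0)"
  using sumB[OF _ assms] by auto

lemma cos_diff_nat:
  "cos (real r * t - real s * t) = cos (real (if s \<le> r then r - s else s - r) * t)"
proof (cases "s \<le> r")
  case True then show ?thesis by (simp add: of_nat_diff left_diff_distrib)
next
  case False
  then have "real r * t - real s * t = - (real (s - r) * t)" by (simp add: of_nat_diff left_diff_distrib)
  then show ?thesis unfolding cos_minus using False by simp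
qed

lemma discB:
  assumes "r < n" "s < n"
  shows "(\<Sum>k\<in>{1..n}. cheb_p r (cheb_node n k) * cheb_p s (cheb_node n k)) = (if r = s then real n / pi else 0)"
proof -
  define th where "th k = (2 * real k - 1) * pi / (2 * real n)" for k
  define d where "d = (if s \<le> r then r - s else s - r)"
  have "(\<Sum>k\<in>{1..n}. cheb_p r (cheb_node n k) * cheb_p s (cheb_node n k))
      = (\<Sum>k\<in>{1..n}. cc r * cc s / 2 * (cos (real d * th k) + cos (real (r + s) * th k)))"
  proof (rule sum.cong[OF refl])
    fix k assume "k \<in> {1..n}"
    then have "arccos (cheb_node n k) = th k" using node_arccos unfolding th_def by auto
    have c1: "cos (real r * th k) * cos (real s * th k) = (cos (real d * th k) + cos (real (r + s) * th k)) / 2"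
      unfolding cos_times_cos d_def cos_diff_nat[symmetric] by (simp add: distrib_right)
    show "cheb_p r (cheb_node n k) * cheb_p s (cheb_node n k) = cc r * cc s / 2 * (cos (real d * th k) + cos (real (r + s) * th k))"
    proof -
      have "cheb_p r (cheb_node n k) * cheb_p s (cheb_node n k) = cc r * cc s * (cos (real r * th k) * cos (real s * th k))"
        unfolding cheb_p_alt \<open>arccos (cheb_node n k) = th k\<close> by (simp add: algebra_simps)
      also have "\<dots> = cc r * cc s / 2 * (cos (real d * th k) + cos (real (r + s) * th k))"
        unfolding c1 by simp
      finally show ?thesis .
    qed
  qed
  also have "\<dots> = cc r * cc s / 2 * ((\<Sum>k\<in>{1..n}. cos (real d * th k)) + (\<Sum>k\<in>{1..n}. cos (real (r + s) * th k)))"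
    by (simp only: sum.distrib[symmetric] sum_distrib_left)
  also have "\<dots> = cc r * cc s / 2 * ((if d = 0 then real n else 0) + (if r + s = 0 then real n else 0))"
  proof -
    have "d < 2 * n" "r + s < 2 * n" using assms unfolding d_def by auto
    then have "(\<Sum>k\<in>{1..n}. cos (real d * th k)) = (if d = 0 then real n else 0)"
      "(\<Sum>k\<in>{1..n}. cos (real (r + s) * th k)) = (if r + s = 0 then real n else 0)"
      unfolding th_def by (simp_all only: sumB')
    then show ?thesis by simp
  qed
  also have "\<dots> = (if r = s then real n / pi else 0)"
    using cc_sq[of r] by (auto simp: d_def)
  finally show ?thesis .
qed

lemma discA:
  assumes "k \<in> {1..n}" "h \<in> {1..n}"
  shows "(\<Sum>r<n. cheb_p r (cheb_node n k) * cheb_p r (cheb_node n h)) = (if k = h then real n / pi else 0)"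
proof -
  define a where "a = real k * pi / real n - real h * pi / real n"
  define d where "d = (if h \<le> k then k - h else h - k)"
  define j where "j = k + h - 1"
  have n1: "n \<ge> 1" using assms by auto
  have ak: "arccos (cheb_node n k) = real k * pi / real n - pi / (2 * real n)"
    using node_arccos[of k n] assms by (simp add: field_simps)
  have ah: "arccos (cheb_node n h) = real h * pi / real n - pi / (2 * real n)"
    using node_arccos[of h n] assms by (simp add: field_simps)
  have fr: "\<And>r. cos (real r * arccos (cheb_node n k)) * cos (real r * arccos (cheb_node n h))
     = (cos (real r * (real d * pi / real n)) + cos (real r * (real j * pi / real n))) / 2"
  proof -
    fix r
    have "cos (real r * arccos (cheb_node n k)) * cos (real r * arccos (cheb_node n h))
      = (cos (real r * arccos (cheb_node n k) - real r * arccos (cheb_node n h)) + cos (real r * arccos (cheb_node n k) + real r * arccos (cheb_node n h))) / 2"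
      by (simp add: cos_times_cos)
    moreover have "real r * arccos (cheb_node n k) - real r * arccos (cheb_node n h) = real k * (real r * pi / real n) - real h * (real r * pi / real n)"
      unfolding ak ah by (simp add: algebra_simps)
    moreover have "real r * arccos (cheb_node n k) + real r * arccos (cheb_node n h) = real r * (real j * pi / real n)"
      unfolding ak ah j_def using assms n1 by (simp add: of_nat_diff field_simps)
    moreover have "cos (real k * (real r * pi / real n) - real h * (real r * pi / real n)) = cos (real r * (real d * pi / real n))"
      unfolding d_def cos_diff_nat by (simp add: algebra_simps)
    ultimately show "?thesis r" by simp
  qed
  have "(\<Sum>r<n. cheb_p r (cheb_node n k) * cheb_p r (cheb_node n h))
      = (\<Sum>r\<in>insert 0 {1..<n}. cheb_p r (cheb_node n k) * cheb_p r (cheb_node n h))"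
    using n1 by (intro sum.cong) auto
  also have "\<dots> = 1/pi + (\<Sum>r\<in>{1..<n}. cheb_p r (cheb_node n k) * cheb_p r (cheb_node n h))"
    by (simp add: cheb_p_def)
  also have "(\<Sum>r\<in>{1..<n}. cheb_p r (cheb_node n k) * cheb_p r (cheb_node n h))
      = (\<Sum>r\<in>{1..<n}. (1/pi) * (cos (real r * (real d * pi / real n)) + cos (real r * (real j * pi / real n))))"
  proof (rule sum.cong[OF refl])
    fix r assume "r \<in> {1..<n}"
    then show "cheb_p r (cheb_node n k) * cheb_p r (cheb_node n h) = (1/pi) * (cos (real r * (real d * pi / real n)) + cos (real r * (real j * pi / real n)))"
    proof -
      have "cheb_p r (cheb_node n k) * cheb_p r (cheb_node n h) = (cc r * cc r) * (cos (real r * arccos (cheb_node n k)) * cos (real r * arccos (cheb_node n h)))"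
        unfolding cheb_p_alt by (simp add: algebra_simps)
      also have "\<dots> = (2/pi) * ((cos (real r * (real d * pi / real n)) + cos (real r * (real j * pi / real n))) / 2)"
        unfolding fr cc_sq using \<open>r \<in> {1..<n}\<close> by simp
      finally show ?thesis by (simp add: field_simps)
    qed
  qed
  also have "\<dots> = (1/pi) * ((\<Sum>r\<in>{1..<n}. cos (real r * (real d * pi / real n))) + (\<Sum>r\<in>{1..<n}. cos (real r * (real j * pi / real n))))"
    by (simp only: sum.distrib[symmetric] sum_distrib_left)
  finally have S: "(\<Sum>r<n. cheb_p r (cheb_node n k) * cheb_p r (cheb_node n h))
     = 1/pi + (1/pi) * ((\<Sum>r\<in>{1..<n}. cos (real r * (real d * pi / real n))) + (\<Sum>r\<in>{1..<n}. cos (real r * (real j * pi / real n))))" .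
  have j: "0 < j" "j < 2 * n" using assms unfolding j_def by auto
  show ?thesis
  proof (cases "k = h")
    case True
    then have "d = 0" "j = 2 * k - 1" unfolding d_def j_def by auto
    then have "(-1::real) ^ (j + 1) = 1" using assms True by (simp add: power_mult)
    then show ?thesis using S sumA[OF j] True \<open>d = 0\<close> n1 by (simp add: field_simps)
  next
    case False
    then have dd: "0 < d" "d < 2 * n" unfolding d_def using assms by auto
    have "odd (d + j)" unfolding d_def j_def using assms by (auto simp: odd_pos)
    then have "(-1::real) ^ (d + 1) + (-1) ^ (j + 1) = 0"
      by (cases "even d") auto
    then have "(\<Sum>r\<in>{1..<n}. cos (real r * (real d * pi / real n))) + (\<Sum>r\<in>{1..<n}. cos (real r * (real j * pi / real n))) = -1"
      unfolding sumA[OF j] sumA[OF dd] by (simp add: field_simps)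
    then show ?thesis using S False by simp
  qed
qed


lemma ftc_arccos:
  fixes G g :: "real \<Rightarrow> real"
  assumes der: "\<And>t. (G has_real_derivative g t) (at t)"
  shows "((\<lambda>x. g (arccos x) * cheb_w x) has_integral (G pi - G 0)) {-1..1}"
proof -
  have cG: "continuous_on UNIV G"
    using der by (meson DERIV_isCont continuous_at_imp_continuous_on)
  have cont: "continuous_on {-1..1} (\<lambda>x. - G (arccos x))"
    by (intro continuous_on_minus continuous_on_compose2[OF cG continuous_on_arccos']) auto
  have d: "((\<lambda>x. - G (arccos x)) has_vector_derivative (g (arccos x) * cheb_w x)) (at x)"
    if "x \<in> {-1<..<1}" for x
  proof -
    have x: "-1 < x" "x < 1" using that by auto
    have D1: "((\<lambda>x. - G (arccos x)) has_real_derivative - (g (arccos x) * inverse (- sqrt (1 - x\<^sup>2)))) (at x)"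
      by (intro DERIV_minus DERIV_chain2[OF der DERIV_arccos[OF x]])
    have E: "- (g (arccos x) * inverse (- sqrt (1 - x\<^sup>2))) = g (arccos x) * cheb_w x"
      unfolding cheb_w_def by (simp add: divide_inverse)
    show ?thesis
      using D1 unfolding E has_real_derivative_iff_has_vector_derivative .
  qed
  have "((\<lambda>x. g (arccos x) * cheb_w x) has_integral ((- G (arccos 1)) - (- G (arccos (-1))))) {-1..1}"
    by (rule fundamental_theorem_of_calculus_interior[OF _ cont d]) auto
  then show ?thesis by simp
qed

lemma cosint:
  "((\<lambda>x. cos (real r * arccos x) * cos (real s * arccos x) * cheb_w x) has_integral
     (if r = s then (if r = 0 then pi else pi / 2) else 0)) {-1..1}"
proof -
  define g where "g t = cos (real r * t) * cos (real s * t)" for t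
  have main: "((\<lambda>x. g (arccos x) * cheb_w x) has_integral (G pi - G 0)) {-1..1}"
    if "\<And>t. (G has_real_derivative g t) (at t)" for G
    using ftc_arccos[OF that] .
  show ?thesis
  proof (cases "r = s")
    case False
    define R where "R = real r - real s"
    define P where "P = real r + real s"
    have RP: "R \<noteq> 0" "P \<noteq> 0" using False unfolding R_def P_def by auto
    define G where "G t = sin (R * t) / (2 * R) + sin (P * t) / (2 * P)" for t
    have "(G has_real_derivative g t) (at t)" for t
    proof -
      have "(G has_real_derivative (cos (R * t) * R / (2 * R) + cos (P * t) * P / (2 * P))) (at t)"
        unfolding G_def by (auto intro!: derivative_eq_intros)
      moreover have "cos (R * t) * R / (2 * R) + cos (P * t) * P / (2 * P) = g t"
      proof -
        have "cos (R * t) * R / (2 * R) + cos (P * t) * P / (2 * P) = (cos (R * t) + cos (P * t)) / 2"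
          using RP by (simp add: field_simps)
        moreover have "R * t = real r * t - real s * t" "P * t = real r * t + real s * t"
          unfolding R_def P_def by (simp_all add: algebra_simps)
        ultimately show ?thesis unfolding g_def cos_times_cos by simp
      qed
      ultimately show ?thesis by simp
    qed
    from main[OF this] have "((\<lambda>x. g (arccos x) * cheb_w x) has_integral (G pi - G 0)) {-1..1}" .
    moreover have "G pi - G 0 = 0"
      unfolding G_def R_def P_def by (simp add: left_diff_distrib distrib_right sin_diff sin_add)
    ultimately show ?thesis using False unfolding g_def by simp
  next
    case True
    show ?thesis
    proof (cases "r = 0")
      case True
      have "((\<lambda>x. x) has_real_derivative g t) (at t)" for t
        unfolding g_def using True \<open>r = s\<close> by (auto intro!: derivative_eq_intros)
      from main[OF this] show ?thesis using True \<open>r = s\<close> unfolding g_def by simp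
    next
      case False
      define G where "G t = t / 2 + sin (2 * real r * t) / (4 * real r)" for t
      have "(G has_real_derivative g t) (at t)" for t
      proof -
        have "(G has_real_derivative (1 / 2 + cos (2 * real r * t) * (2 * real r) / (4 * real r))) (at t)"
          unfolding G_def by (auto intro!: derivative_eq_intros)
        moreover have "1 / 2 + cos (2 * real r * t) * (2 * real r) / (4 * real r) = g t"
          using False \<open>r = s\<close> unfolding g_def cos_times_cos by (simp add: algebra_simps)
        ultimately show ?thesis by simp
      qed
      from main[OF this] have "((\<lambda>x. g (arccos x) * cheb_w x) has_integral (G pi - G 0)) {-1..1}" .
      moreover have "G pi - G 0 = pi / 2"
      proof -
        have "sin (2 * real r * pi) = 0" using sin_npi[of "2*r"] by (simp add: mult.assoc)
        then show ?thesis unfolding G_def by simp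
      qed
      ultimately show ?thesis using False \<open>r = s\<close> unfolding g_def by simp
    qed
  qed
qed


lemma chebint:
  "((\<lambda>x. cheb_p r x * cheb_p s x * cheb_w x) has_integral (if r = s then 1 else 0)) {-1..1}"
proof -
  have e: "(\<lambda>x. cheb_p r x * cheb_p s x * cheb_w x) = (\<lambda>x. (cc r * cc s) * (cos (real r * arccos x) * cos (real s * arccos x) * cheb_w x))"
    by (simp add: cheb_p_alt fun_eq_iff algebra_simps)
  have v: "cc r * cc s * (if r = s then (if r = 0 then pi else pi / 2) else 0) = (if r = s then 1 else 0)"
    using cc_sq[of r] by auto
  show ?thesis unfolding e v[symmetric] by (rule has_integral_mult_right[OF cosint])
qed

lemma bilin:
  fixes u v :: "'i \<Rightarrow> real \<Rightarrow> real" and w :: "real \<Rightarrow> real"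
  assumes "finite I" "finite J"
    and h: "\<And>i j. i \<in> I \<Longrightarrow> j \<in> J \<Longrightarrow> ((\<lambda>x. u i x * v j x * w x) has_integral M i j) S"
  shows "((\<lambda>x. (\<Sum>i\<in>I. a i * u i x) * (\<Sum>j\<in>J. b j * v j x) * w x) has_integral (\<Sum>i\<in>I. \<Sum>j\<in>J. a i * b j * M i j)) S"
proof -
  have e: "(\<lambda>x. (\<Sum>i\<in>I. a i * u i x) * (\<Sum>j\<in>J. b j * v j x) * w x) = (\<lambda>x. \<Sum>i\<in>I. \<Sum>j\<in>J. (a i * b j) * (u i x * v j x * w x))"
  proof
    fix x
    have "(\<Sum>i\<in>I. a i * u i x) * (\<Sum>j\<in>J. b j * v j x) * w x = (\<Sum>i\<in>I. \<Sum>j\<in>J. ((a i * u i x) * (b j * v j x)) * w x)"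
      unfolding sum_product by (simp only: sum_distrib_right)
    also have "\<dots> = (\<Sum>i\<in>I. \<Sum>j\<in>J. (a i * b j) * (u i x * v j x * w x))"
      by (intro sum.cong refl) (simp add: mult_ac)
    finally show "(\<Sum>i\<in>I. a i * u i x) * (\<Sum>j\<in>J. b j * v j x) * w x = (\<Sum>i\<in>I. \<Sum>j\<in>J. (a i * b j) * (u i x * v j x * w x))" .
  qed
  show ?thesis unfolding e
    using assms by (intro has_integral_sum has_integral_mult_right h) auto
qed

definition qi :: "nat \<Rightarrow> nat \<Rightarrow> nat \<Rightarrow> nat" where
  "qi n r i = (if i = 0 then r else 2 * n - r)"
definition qa :: "nat \<Rightarrow> nat \<Rightarrow> nat \<Rightarrow> nat \<Rightarrow> real" where
  "qa n m r i = (if i = 0 then (if r \<le> n - m then 1 else vp_mu n m r) else (if r \<le> n - m then 0 else - vp_mu n m (2 * n - r)))"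

lemma q_dec: "vp_q n m r x = (\<Sum>i\<in>{0::nat, 1}. qa n m r i * cheb_p (qi n r i) x)"
  by (simp add: vp_q_def qa_def qi_def)

lemma qa_nu:
  assumes "0 < m" "m < n" "r < n"
  shows "qa n m r 0 * qa n m r 0 + qa n m r 1 * qa n m r 1 = vp_nu n m r"
proof (cases "r \<le> n - m")
  case True then show ?thesis by (simp add: qa_def vp_nu_def)
next
  case False
  have m1: "vp_mu n m r = (real m + real n - real r) / (2 * real m)"
    using False assms by (simp add: vp_mu_def)
  have "\<not> 2 * n - r \<le> n - m" "2 * n - r < n + m" "r \<le> 2 * n" using False assms by auto
  then have m2: "vp_mu n m (2 * n - r) = (real m - real n + real r) / (2 * real m)"
    by (simp add: vp_mu_def of_nat_diff)
  show ?thesis using False assms unfolding qa_def vp_nu_def m1 m2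
    by (simp add: field_simps power2_eq_square)
qed

lemma nu_pos: "0 < m \<Longrightarrow> 0 < vp_nu n m r"
  by (simp add: vp_nu_def add_pos_nonneg)

lemma qint:
  assumes "0 < m" "m < n" "r < n" "s < n"
  shows "((\<lambda>x. vp_q n m r x * vp_q n m s x * cheb_w x) has_integral (if r = s then vp_nu n m r else 0)) {-1..1}"
proof -
  have "((\<lambda>x. (\<Sum>i\<in>{0::nat, 1}. qa n m r i * cheb_p (qi n r i) x) * (\<Sum>j\<in>{0::nat, 1}. qa n m s j * cheb_p (qi n s j) x) * cheb_w x)
     has_integral (\<Sum>i\<in>{0::nat, 1}. \<Sum>j\<in>{0::nat, 1}. qa n m r i * qa n m s j * (if qi n r i = qi n s j then 1 else 0))) {-1..1}"
    by (rule bilin) (simp_all only: finite.intros, rule chebint)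
  moreover have "(\<Sum>i\<in>{0::nat, 1}. \<Sum>j\<in>{0::nat, 1}. qa n m r i * qa n m s j * (if qi n r i = qi n s j then 1 else 0))
      = (if r = s then vp_nu n m r else 0)"
  proof -
    have q: "qi n r 0 = r" "qi n r 1 = 2 * n - r" "qi n s 0 = s" "qi n s 1 = 2 * n - s"
      by (simp_all add: qi_def)
    have ne: "r \<noteq> 2 * n - s" "2 * n - r \<noteq> s" and eq: "(2 * n - r = 2 * n - s) = (r = s)"
      using assms by auto
    have "(\<Sum>i\<in>{0::nat, 1}. \<Sum>j\<in>{0::nat, 1}. qa n m r i * qa n m s j * (if qi n r i = qi n s j then 1 else 0))
      = qa n m r 0 * qa n m s 0 * (if r = s then 1 else 0) + qa n m r 1 * qa n m s 1 * (if r = s then 1 else 0)"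
      by (simp add: qi_def ne eq)
    also have "\<dots> = (if r = s then vp_nu n m r else 0)"
    proof (cases "r = s")
      case True
      then have s: "s = r" by simp
      show ?thesis unfolding s using qa_nu[OF assms(1,2,3)] by simp
    next
      case False
      then show ?thesis by simp
    qed
    finally show ?thesis .
  qed
  ultimately show ?thesis unfolding q_dec[symmetric] by (simp only:)
qed

lemma tau_sq:
  assumes "0 < m" "0 < n"
  shows "vp_tau n m r k * vp_tau n m r h * vp_nu n m r = pi / real n * (cheb_p r (cheb_node n k) * cheb_p r (cheb_node n h))"
proof -
  have nu: "0 < vp_nu n m r" using nu_pos[OF assms(1)] .
  have "vp_tau n m r k * vp_tau n m r h * vp_nu n m r
     = (sqrt (pi / (real n * vp_nu n m r)) * sqrt (pi / (real n * vp_nu n m r))) * vp_nu n m r * (cheb_p r (cheb_node n k) * cheb_p r (cheb_node n h))"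
    unfolding vp_tau_def by (simp add: algebra_simps)
  also have "\<dots> = pi / real n * (cheb_p r (cheb_node n k) * cheb_p r (cheb_node n h))"
    using nu assms by simp
  finally show ?thesis .
qed

lemma phiint:
  assumes "0 < m" "m < n" "k \<in> {1..n}" "h \<in> {1..n}"
  shows "((\<lambda>x. vp_phi n m k x * vp_phi n m h x * cheb_w x) has_integral (if k = h then 1 else 0)) {-1..1}"
proof -
  have "((\<lambda>x. (\<Sum>r<n. vp_tau n m r k * vp_q n m r x) * (\<Sum>s<n. vp_tau n m s h * vp_q n m s x) * cheb_w x)
     has_integral (\<Sum>r<n. \<Sum>s<n. vp_tau n m r k * vp_tau n m s h * (if r = s then vp_nu n m r else 0))) {-1..1}"
    by (rule bilin) (simp_all only: finite_lessThan, rule qint, use assms in auto)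
  moreover have "(\<Sum>r<n. \<Sum>s<n. vp_tau n m r k * vp_tau n m s h * (if r = s then vp_nu n m r else 0))
      = (\<Sum>r<n. vp_tau n m r k * vp_tau n m r h * vp_nu n m r)"
  proof (rule sum.cong[OF refl])
    fix r assume "r \<in> {..<n}"
    have "(\<Sum>s<n. vp_tau n m r k * vp_tau n m s h * (if r = s then vp_nu n m r else 0))
       = (\<Sum>s<n. if s = r then vp_tau n m r k * vp_tau n m r h * vp_nu n m r else 0)"
      by (rule sum.cong) auto
    then show "(\<Sum>s<n. vp_tau n m r k * vp_tau n m s h * (if r = s then vp_nu n m r else 0)) = vp_tau n m r k * vp_tau n m r h * vp_nu n m r"
      using \<open>r \<in> {..<n}\<close> by simp
  qed
  moreover have "(\<Sum>r<n. vp_tau n m r k * vp_tau n m r h * vp_nu n m r) = pi / real n * (\<Sum>r<n. cheb_p r (cheb_node n k) * cheb_p r (cheb_node n h))"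
    using assms by (simp add: tau_sq sum_distrib_left)
  moreover have "pi / real n * (\<Sum>r<n. cheb_p r (cheb_node n k) * cheb_p r (cheb_node n h)) = (if k = h then 1 else 0)"
    unfolding discA[OF assms(3,4)] using assms by auto
  ultimately show ?thesis unfolding vp_phi_def by simp
qed

lemma q_from_phi:
  assumes "0 < m" "m < n" "s < n"
  shows "vp_q n m s x = (\<Sum>k\<in>{1..n}. (vp_nu n m s * vp_tau n m s k) * vp_phi n m k x)"
proof -
  have c: "(\<Sum>k\<in>{1..n}. vp_nu n m s * vp_tau n m s k * vp_tau n m r k) = (if r = s then 1 else 0)" if "r < n" for r
  proof -
    have "(\<Sum>k\<in>{1..n}. vp_nu n m s * vp_tau n m s k * vp_tau n m r k)
      = vp_nu n m s * sqrt (pi / (real n * vp_nu n m s)) * sqrt (pi / (real n * vp_nu n m r)) * (\<Sum>k\<in>{1..n}. cheb_p s (cheb_node n k) * cheb_p r (cheb_node n k))"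
      unfolding vp_tau_def by (simp add: sum_distrib_left algebra_simps)
    also have "\<dots> = (if r = s then 1 else 0)"
    proof (cases "r = s")
      case True
      have nu: "0 < vp_nu n m s" using nu_pos[OF assms(1)] .
      have "vp_nu n m s * sqrt (pi / (real n * vp_nu n m s)) * sqrt (pi / (real n * vp_nu n m s)) * (real n / pi)
          = vp_nu n m s * (sqrt (pi / (real n * vp_nu n m s)) * sqrt (pi / (real n * vp_nu n m s))) * (real n / pi)"
        by (simp only: mult.assoc)
      also have "\<dots> = 1" using nu assms by simp
      finally show ?thesis unfolding discB[OF assms(3) that] using True by simp
    next
      case False
      then show ?thesis unfolding discB[OF assms(3) that] by simp
    qed
    finally show ?thesis .
  qed
  have "(\<Sum>k\<in>{1..n}. (vp_nu n m s * vp_tau n m s k) * vp_phi n m k x)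
     = (\<Sum>k\<in>{1..n}. \<Sum>r<n. (vp_nu n m s * vp_tau n m s k * vp_tau n m r k) * vp_q n m r x)"
    unfolding vp_phi_def by (simp add: sum_distrib_left algebra_simps)
  also have "\<dots> = (\<Sum>r<n. \<Sum>k\<in>{1..n}. (vp_nu n m s * vp_tau n m s k * vp_tau n m r k) * vp_q n m r x)"
    by (rule sum.swap)
  also have "\<dots> = (\<Sum>r<n. (\<Sum>k\<in>{1..n}. vp_nu n m s * vp_tau n m s k * vp_tau n m r k) * vp_q n m r x)"
    by (simp add: sum_distrib_right)
  also have "\<dots> = (\<Sum>r<n. if r = s then vp_q n m r x else 0)"
  proof (rule sum.cong[OF refl])
    fix r assume "r \<in> {..<n}"
    then have "(\<Sum>k\<in>{1..n}. vp_nu n m s * vp_tau n m s k * vp_tau n m r k) = (if r = s then 1 else 0)"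
      using c by simp
    then show "(\<Sum>k\<in>{1..n}. vp_nu n m s * vp_tau n m s k * vp_tau n m r k) * vp_q n m r x = (if r = s then vp_q n m r x else 0)"
      by simp
  qed
  also have "\<dots> = vp_q n m s x" using assms by simp
  finally show ?thesis by simp
qed

theorem proposition1:
  fixes n m :: nat
  assumes "0 < m" and "m < n"
  shows "VP_space n m = fun_span (vp_phi n m) {1..n}
    \<and> (\<forall>k\<in>{1..n}. \<forall>h\<in>{1..n}.
         ((\<lambda>x. vp_phi n m k x * vp_phi n m h x * cheb_w x) has_integral
            (if k = h then 1 else 0)) {-1..1})"
proof
  show "\<forall>k\<in>{1..n}. \<forall>h\<in>{1..n}. ((\<lambda>x. vp_phi n m k x * vp_phi n m h x * cheb_w x) has_integral (if k = h then 1 else 0)) {-1..1}"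
    using phiint[OF assms] by blast
  show "VP_space n m = fun_span (vp_phi n m) {1..n}"
  proof
    show "VP_space n m \<subseteq> fun_span (vp_phi n m) {1..n}"
    proof
      fix f assume "f \<in> VP_space n m"
      then obtain c where f: "f = (\<lambda>x. \<Sum>r\<in>{0..<n}. c r * vp_q n m r x)"
        unfolding VP_space_def fun_span_def by blast
      define c' where "c' k = (\<Sum>r\<in>{0..<n}. c r * (vp_nu n m r * vp_tau n m r k))" for k
      have "f = (\<lambda>x. \<Sum>k\<in>{1..n}. c' k * vp_phi n m k x)"
      proof
        fix x
        have "f x = (\<Sum>r\<in>{0..<n}. c r * (\<Sum>k\<in>{1..n}. (vp_nu n m r * vp_tau n m r k) * vp_phi n m k x))"
          unfolding f using q_from_phi[OF assms] by (intro sum.cong) auto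
        also have "\<dots> = (\<Sum>r\<in>{0..<n}. \<Sum>k\<in>{1..n}. c r * (vp_nu n m r * vp_tau n m r k) * vp_phi n m k x)"
          by (simp add: sum_distrib_left mult.assoc)
        also have "\<dots> = (\<Sum>k\<in>{1..n}. \<Sum>r\<in>{0..<n}. c r * (vp_nu n m r * vp_tau n m r k) * vp_phi n m k x)"
          by (rule sum.swap)
        also have "\<dots> = (\<Sum>k\<in>{1..n}. c' k * vp_phi n m k x)"
          unfolding c'_def by (simp add: sum_distrib_right)
        finally show "f x = (\<Sum>k\<in>{1..n}. c' k * vp_phi n m k x)" .
      qed
      then show "f \<in> fun_span (vp_phi n m) {1..n}" unfolding fun_span_def by blast
    qed
    show "fun_span (vp_phi n m) {1..n} \<subseteq> VP_space n m"
    proof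
      fix f assume "f \<in> fun_span (vp_phi n m) {1..n}"
      then obtain c where f: "f = (\<lambda>x. \<Sum>k\<in>{1..n}. c k * vp_phi n m k x)"
        unfolding fun_span_def by blast
      define c' where "c' r = (\<Sum>k\<in>{1..n}. c k * vp_tau n m r k)" for r
      have "f = (\<lambda>x. \<Sum>r\<in>{0..<n}. c' r * vp_q n m r x)"
      proof
        fix x
        have "f x = (\<Sum>k\<in>{1..n}. \<Sum>r<n. c k * vp_tau n m r k * vp_q n m r x)"
          unfolding f vp_phi_def by (simp add: sum_distrib_left mult.assoc)
        also have "\<dots> = (\<Sum>r<n. \<Sum>k\<in>{1..n}. c k * vp_tau n m r k * vp_q n m r x)"
          by (rule sum.swap)
        also have "\<dots> = (\<Sum>r\<in>{0..<n}. c' r * vp_q n m r x)"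
          unfolding c'_def atLeast0LessThan by (simp add: sum_distrib_right)
        finally show "f x = (\<Sum>r\<in>{0..<n}. c' r * vp_q n m r x)" .
      qed
      then show "f \<in> VP_space n m" unfolding VP_space_def fun_span_def by blast
    qed
  qed
qed

end
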